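(* Let $A\in\mathcal{B}(\Omega)$ with $c(A)>0$ and let $X\in\mathbb{L}^1(\Omega)$ satisfy $0\le XI_A\le M$ for a constant $M>0$. Then for each $\delta>0$, $\hat{\mathbb{E}}[(X+\delta)I_A]>\hat{\mathbb{E}}[XI_A]$.
   Context: $\Omega=C_0^d(\mathbb{R}^+)$ is the space of continuous paths from $[0,\infty)$ to $\mathbb{R}^d$ starting at $0$. $\mathcal{P}$ is a (weakly compact) set of probability measures on $(\Omega,\mathcal{B}(\Omega))$ representing the $G$-expectation. For $X\in L^0(\Omega)$ (Borel maps into $[-\infty,\infty]$) with $E_P[X]$ defined for all $P\in\mathcal{P}$, $\hat{\mathbb{E}}[X]:=\sup_{P\in\mathcal{P}}E_P[X]$; $c(A)=\sup_{P\in\mathcal{P}}P(A)$; $\mathbb{L}^1(\Omega)=\{X\in L^0(\Omega):\hat{\mathbb{E}}[|X|]<\infty\}$. *)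

theory Defs
  imports "HOL-Probability.Probability"
begin

text \<open>The path space Omega = C_0^d(R^+): continuous paths [0,oo) -> R^d starting at 0.
  A path is represented as a function on real, normalised to 0 for negative times.\<close>

definition Omega :: "(real \<Rightarrow> real ^ 'd::finite) set" where
  "Omega = {\<omega>. continuous_on {0..} \<omega> \<and> \<omega> 0 = 0 \<and> (\<forall>t<0. \<omega> t = 0)}"

definition path_dist :: "(real \<Rightarrow> real ^ 'd::finite) \<Rightarrow> (real \<Rightarrow> real ^ 'd::finite) \<Rightarrow> real" where
  "path_dist \<omega> \<omega>' =
     (\<Sum>n. (1/2) ^ (Suc n) * min 1 (SUP t\<in>{0..real n}. norm (\<omega> t - \<omega>' t)))"

definition path_open :: "(real \<Rightarrow> real ^ 'd::finite) set \<Rightarrow> bool" where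
  "path_open U \<longleftrightarrow> U \<subseteq> Omega \<and>
     (\<forall>\<omega>\<in>U. \<exists>e>0. \<forall>\<omega>'\<in>Omega. path_dist \<omega> \<omega>' < e \<longrightarrow> \<omega>' \<in> U)"

definition PathSpace :: "(real \<Rightarrow> real ^ 'd::finite) measure" where
  "PathSpace = sigma Omega {U. path_open U}"

definition path_bounded_continuous :: "((real \<Rightarrow> real ^ 'd::finite) \<Rightarrow> real) \<Rightarrow> bool" where
  "path_bounded_continuous f \<longleftrightarrow>
     (\<exists>B. \<forall>\<omega>\<in>Omega. \<bar>f \<omega>\<bar> \<le> B) \<and>
     (\<forall>\<omega>\<in>Omega. \<forall>e>0. \<exists>d>0. \<forall>\<omega>'\<in>Omega. path_dist \<omega> \<omega>' < d \<longrightarrow> \<bar>f \<omega>' - f \<omega>\<bar> < e)"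

definition weak_conv_path ::
  "(nat \<Rightarrow> (real \<Rightarrow> real ^ 'd::finite) measure) \<Rightarrow> (real \<Rightarrow> real ^ 'd::finite) measure \<Rightarrow> bool" where
  "weak_conv_path Ps P \<longleftrightarrow>
     (\<forall>f. path_bounded_continuous f \<longrightarrow>
        (\<lambda>n. \<integral>\<omega>. f \<omega> \<partial>(Ps n)) \<longlonglongrightarrow> (\<integral>\<omega>. f \<omega> \<partial>P))"

definition prob_on_path :: "(real \<Rightarrow> real ^ 'd::finite) measure \<Rightarrow> bool" where
  "prob_on_path P \<longleftrightarrow> prob_space P \<and> sets P = sets PathSpace"

text \<open>Weak compactness (sequential form; the weak topology on probability measures on the
  Polish space Omega is metrisable, so this is equivalent to compactness).\<close>

definition weakly_compact :: "(real \<Rightarrow> real ^ 'd::finite) measure set \<Rightarrow> bool" where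
  "weakly_compact \<P> \<longleftrightarrow>
     (\<forall>Ps. (\<forall>n::nat. Ps n \<in> \<P>) \<longrightarrow>
        (\<exists>r P. strict_mono r \<and> P \<in> \<P> \<and> weak_conv_path (Ps \<circ> r) P))"

definition Ex :: "'a measure \<Rightarrow> ('a \<Rightarrow> ereal) \<Rightarrow> ereal" where
  "Ex P X = enn2ereal (\<integral>\<^sup>+ \<omega>. e2ennreal (X \<omega>) \<partial>P) - enn2ereal (\<integral>\<^sup>+ \<omega>. e2ennreal (- X \<omega>) \<partial>P)"

definition Ex_defined :: "'a measure \<Rightarrow> ('a \<Rightarrow> ereal) \<Rightarrow> bool" where
  "Ex_defined P X \<longleftrightarrow> (\<integral>\<^sup>+ \<omega>. e2ennreal (X \<omega>) \<partial>P) < \<infinity> \<or> (\<integral>\<^sup>+ \<omega>. e2ennreal (- X \<omega>) \<partial>P) < \<infinity>"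

definition hatE :: "'a measure set \<Rightarrow> ('a \<Rightarrow> ereal) \<Rightarrow> ereal" where
  "hatE \<P> X = (SUP P\<in>\<P>. Ex P X)"

definition cap :: "'a measure set \<Rightarrow> 'a set \<Rightarrow> ennreal" where
  "cap \<P> A = (SUP P\<in>\<P>. emeasure P A)"

definition L1 :: "'a measure \<Rightarrow> 'a measure set \<Rightarrow> ('a \<Rightarrow> ereal) set" where
  "L1 M \<P> = {X. X \<in> borel_measurable M \<and> (\<forall>P\<in>\<P>. Ex_defined P (\<lambda>\<omega>. \<bar>X \<omega>\<bar>))
                 \<and> hatE \<P> (\<lambda>\<omega>. \<bar>X \<omega>\<bar>) < \<infinity>}"

end

theory Submission
  imports Defs
begin

lemma Ex_real:
  assumes P: "prob_space P" and f: "f \<in> borel_measurable P"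
    and b: "\<forall>\<omega>\<in>space P. 0 \<le> f \<omega> \<and> f \<omega> \<le> B"
    and Y: "\<forall>\<omega>\<in>space P. Y \<omega> = ereal (f \<omega>)"
  shows "Ex P Y = ereal (\<integral>\<omega>. f \<omega> \<partial>P)"
proof -
  interpret prob_space P by fact
  have int: "integrable P f"
    using b f by (intro integrable_const_bound[where B=B]) (auto intro!: AE_I2)
  have 1: "(\<integral>\<^sup>+ \<omega>. e2ennreal (Y \<omega>) \<partial>P) = (\<integral>\<^sup>+ \<omega>. ennreal (f \<omega>) \<partial>P)"
    using Y by (intro nn_integral_cong) simp
  have 2: "(\<integral>\<^sup>+ \<omega>. e2ennreal (- Y \<omega>) \<partial>P) = (\<integral>\<^sup>+ \<omega>. 0 \<partial>P)"
    using Y b by (intro nn_integral_cong) (simp add: ennreal_neg)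
  have 3: "(\<integral>\<^sup>+ \<omega>. ennreal (f \<omega>) \<partial>P) = ennreal (\<integral>\<omega>. f \<omega> \<partial>P)"
    using int b by (intro nn_integral_eq_integral) (auto intro!: AE_I2)
  have "0 \<le> (\<integral>\<omega>. f \<omega> \<partial>P)" using b by (intro integral_nonneg_AE) (auto intro!: AE_I2)
  then show ?thesis unfolding Ex_def 1 2 3 by (simp add: zero_ennreal.rep_eq)
qed

theorem proposition3p6:
  fixes \<P> :: "(real \<Rightarrow> real ^ 'd) measure set"
    and A :: "(real \<Rightarrow> real ^ 'd) set"
    and X :: "(real \<Rightarrow> real ^ 'd) \<Rightarrow> ereal"
    and M :: real and \<delta> :: real
  assumes "\<forall>P\<in>\<P>. prob_on_path P"
    and "weakly_compact \<P>"
    and "A \<in> sets PathSpace"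
    and "cap \<P> A > 0"
    and "X \<in> L1 PathSpace \<P>"
    and "M > 0"
    and "\<forall>\<omega>\<in>Omega. 0 \<le> X \<omega> * indicator A \<omega> \<and> X \<omega> * indicator A \<omega> \<le> ereal M"
    and "\<delta> > 0"
  shows "hatE \<P> (\<lambda>\<omega>. (X \<omega> + ereal \<delta>) * indicator A \<omega>) > hatE \<P> (\<lambda>\<omega>. X \<omega> * indicator A \<omega>)"
proof -
  note a = assms
  define z where "z \<omega> = real_of_ereal (X \<omega> * indicator A \<omega>)" for \<omega>
  define e where "e P = (\<integral>\<omega>. z \<omega> \<partial>P)" for P
  define g where "g P = measure P A" for P
  have spPS: "space PathSpace = Omega" unfolding PathSpace_def by (simp add: space_measure_of_conv)
  have XM: "X \<in> borel_measurable PathSpace" using a(5) unfolding L1_def by auto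
  have zM: "z \<in> borel_measurable PathSpace" unfolding z_def
    using XM a(3) by measurable
  have zb: "\<forall>\<omega>\<in>(Omega::(real \<Rightarrow> real^'d) set). 0 \<le> z \<omega> \<and> z \<omega> \<le> M * indicator A \<omega>"
  proof
    fix \<omega> assume "\<omega> \<in> (Omega::(real \<Rightarrow> real^'d) set)"
    with a(7) have h: "0 \<le> X \<omega> * indicator A \<omega>" "X \<omega> * indicator A \<omega> \<le> ereal M" by auto
    show "0 \<le> z \<omega> \<and> z \<omega> \<le> M * indicator A \<omega>"
    proof (cases "\<omega> \<in> A")
      case True
      with h have "0 \<le> X \<omega>" "X \<omega> \<le> ereal M" by auto
      then show ?thesis using True unfolding z_def
        by (cases "X \<omega>") auto
    next
      case False then show ?thesis unfolding z_def by simp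
    qed
  qed
  have zle: "\<forall>\<omega>\<in>(Omega::(real \<Rightarrow> real^'d) set). z \<omega> \<le> M"
  proof
    fix \<omega> assume "\<omega> \<in> (Omega::(real \<Rightarrow> real^'d) set)"
    then have "z \<omega> \<le> M * indicator A \<omega>" using zb by auto
    then show "z \<omega> \<le> M" using a(6) by (cases "\<omega> \<in> A") auto
  qed
  have Wz: "\<forall>\<omega>\<in>(Omega::(real \<Rightarrow> real^'d) set). (X \<omega> + ereal \<delta>) * indicator A \<omega> = ereal (z \<omega> + \<delta> * indicator A \<omega>)"
  proof
    fix \<omega> assume "\<omega> \<in> (Omega::(real \<Rightarrow> real^'d) set)"
    with a(7) have h: "0 \<le> X \<omega> * indicator A \<omega>" "X \<omega> * indicator A \<omega> \<le> ereal M" by auto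
    show "(X \<omega> + ereal \<delta>) * indicator A \<omega> = ereal (z \<omega> + \<delta> * indicator A \<omega>)"
    proof (cases "\<omega> \<in> A")
      case True
      with h have "0 \<le> X \<omega>" "X \<omega> \<le> ereal M" by auto
      then show ?thesis using True unfolding z_def
        by (cases "X \<omega>") auto
    next
      case False then show ?thesis unfolding z_def by simp
    qed
  qed
  have Zz: "\<forall>\<omega>\<in>(Omega::(real \<Rightarrow> real^'d) set). X \<omega> * indicator A \<omega> = ereal (z \<omega>)"
  proof
    fix \<omega> assume "\<omega> \<in> (Omega::(real \<Rightarrow> real^'d) set)"
    with a(7) have h: "0 \<le> X \<omega> * indicator A \<omega>" "X \<omega> * indicator A \<omega> \<le> ereal M" by auto
    show "X \<omega> * indicator A \<omega> = ereal (z \<omega>)"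
    proof (cases "\<omega> \<in> A")
      case True
      with h have "0 \<le> X \<omega>" "X \<omega> \<le> ereal M" by auto
      then show ?thesis using True unfolding z_def
        by (cases "X \<omega>") auto
    next
      case False then show ?thesis unfolding z_def by simp
    qed
  qed
  have PP: "prob_space P \<and> space P = Omega \<and> sets P = sets PathSpace" if "P \<in> \<P>" for P
    using a(1) that spPS unfolding prob_on_path_def by (metis sets_eq_imp_space_eq)
  have EZ: "Ex P (\<lambda>\<omega>. X \<omega> * indicator A \<omega>) = ereal (e P)" if "P \<in> \<P>" for P
  proof -
    have m: "z \<in> borel_measurable P" using PP[OF that] zM measurable_cong_sets by blast
    have "\<forall>\<omega>\<in>space P. 0 \<le> z \<omega> \<and> z \<omega> \<le> M"
    proof
      fix \<omega> assume "\<omega> \<in> space P"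
      then have "0 \<le> z \<omega> \<and> z \<omega> \<le> M * indicator A \<omega>" using zb PP[OF that] by auto
      then show "0 \<le> z \<omega> \<and> z \<omega> \<le> M" using a(6) by (cases "\<omega> \<in> A") auto
    qed
    then show ?thesis unfolding e_def
      by (intro Ex_real[where B=M]) (use PP[OF that] m Zz in auto)
  qed
  have EW: "Ex P (\<lambda>\<omega>. (X \<omega> + ereal \<delta>) * indicator A \<omega>) = ereal (e P + \<delta> * g P)"
     and eg: "0 \<le> e P" "e P \<le> M * g P" "0 \<le> g P" if "P \<in> \<P>" for P
  proof -
    interpret prob_space P using PP[OF that] by blast
    have m: "z \<in> borel_measurable P" using PP[OF that] zM measurable_cong_sets by blast
    have AP: "A \<in> sets P" using PP[OF that] a(3) by simp
    have zb': "\<forall>\<omega>\<in>space P. 0 \<le> z \<omega> \<and> z \<omega> \<le> M * indicator A \<omega>" using zb PP[OF that] by auto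
    have iz: "integrable P z"
      using zb' zle PP[OF that] m by (intro integrable_const_bound[where B=M]) (auto intro!: AE_I2)
    have iA1: "integrable P (indicator A :: _ \<Rightarrow> real)" using AP by (simp add: emeasure_eq_measure)
    have iA: "integrable P (\<lambda>\<omega>. \<delta> * indicator A \<omega> :: real)" using AP by (simp add: emeasure_eq_measure)
    have "Ex P (\<lambda>\<omega>. (X \<omega> + ereal \<delta>) * indicator A \<omega>) = ereal (\<integral>\<omega>. z \<omega> + \<delta> * indicator A \<omega> \<partial>P)"
      by (intro Ex_real[where B="M+\<delta>"]) (use PP[OF that] m AP zb' zle Wz a(6,8) in \<open>auto split: split_indicator\<close>)
    also have "(\<integral>\<omega>. z \<omega> + \<delta> * indicator A \<omega> \<partial>P) = e P + \<delta> * g P"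
      unfolding e_def g_def using iz iA AP by (simp add: Bochner_Integration.integral_add)
    finally show "Ex P (\<lambda>\<omega>. (X \<omega> + ereal \<delta>) * indicator A \<omega>) = ereal (e P + \<delta> * g P)" .
    show "0 \<le> e P" unfolding e_def using zb' by (intro integral_nonneg_AE) (auto intro!: AE_I2)
    have "e P \<le> (\<integral>\<omega>. M * indicator A \<omega> \<partial>P)" unfolding e_def
      using zb' iz iA1 AP by (intro integral_mono_AE) (auto intro!: AE_I2)
    also have "\<dots> = M * g P" unfolding g_def using AP by simp
    finally show "e P \<le> M * g P" .
    show "0 \<le> g P" unfolding g_def by simp
  qed
  obtain P0 where P0: "P0 \<in> \<P>" "emeasure P0 A > 0" using a(4) unfolding cap_def
    by (auto simp: less_SUP_iff)
  have gP0: "g P0 > 0"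
  proof -
    interpret prob_space P0 using PP[OF P0(1)] by blast
    show ?thesis using P0(2) unfolding g_def by (simp add: emeasure_eq_measure)
  qed
  have HZ: "hatE \<P> (\<lambda>\<omega>. X \<omega> * indicator A \<omega>) = (SUP P\<in>\<P>. ereal (e P))"
    unfolding hatE_def using EZ by (intro SUP_cong) auto
  have HW: "hatE \<P> (\<lambda>\<omega>. (X \<omega> + ereal \<delta>) * indicator A \<omega>) = (SUP P\<in>\<P>. ereal (e P + \<delta> * g P))"
    unfolding hatE_def using EW by (intro SUP_cong) auto
  show ?thesis
  proof (rule ccontr)
    assume "\<not> ?thesis"
    then have le: "(SUP P\<in>\<P>. ereal (e P + \<delta> * g P)) \<le> (SUP P\<in>\<P>. ereal (e P))"
      unfolding HZ HW by simp
    have sM: "(SUP P\<in>\<P>. ereal (e P)) \<le> ereal M"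
    proof (rule SUP_least)
      fix P assume "P \<in> \<P>"
      interpret prob_space P using PP[OF \<open>P \<in> \<P>\<close>] by blast
      have "g P \<le> 1" unfolding g_def by simp
      then show "ereal (e P) \<le> ereal M" using eg[OF \<open>P \<in> \<P>\<close>] a(6)
        by (simp add: mult_left_le order_trans)
    qed
    have s0: "ereal (e P0) \<le> (SUP P\<in>\<P>. ereal (e P))" using P0(1) by (rule SUP_upper)
    obtain r where r: "(SUP P\<in>\<P>. ereal (e P)) = ereal r" and r0: "0 \<le> r"
      using s0 sM eg(1)[OF P0(1)]
      by (cases "(SUP P\<in>\<P>. ereal (e P))") auto
    have bnd: "e P + \<delta> * g P \<le> r" if "P \<in> \<P>" for P
    proof -
      have "ereal (e P + \<delta> * g P) \<le> (SUP P\<in>\<P>. ereal (e P + \<delta> * g P))"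
        using that by (rule SUP_upper)
      then have "ereal (e P + \<delta> * g P) \<le> (SUP P\<in>\<P>. ereal (e P))" using le by (rule order_trans)
      then show ?thesis using r by simp
    qed
    have eb: "e P \<le> r * M / (M + \<delta>)" if "P \<in> \<P>" for P
    proof -
      have "e P * \<delta> \<le> M * g P * \<delta>" using eg(2)[OF that] a(8) by simp
      moreover have "M * (e P + \<delta> * g P) \<le> M * r"
        using bnd[OF that] a(6) by (intro mult_left_mono) auto
      ultimately have "e P * (M + \<delta>) \<le> r * M"
        by (simp add: algebra_simps)
      then show ?thesis using a(6,8) by (simp add: field_simps)
    qed
    have "(SUP P\<in>\<P>. ereal (e P)) \<le> ereal (r * M / (M + \<delta>))"
      using eb by (intro SUP_least) simp
    then have "r \<le> r * M / (M + \<delta>)" using r by simp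
    then have "r * (M + \<delta>) \<le> r * M" using a(6,8) by (simp add: field_simps)
    then have "r * \<delta> \<le> 0" by (simp add: algebra_simps)
    then have "r \<le> 0" using a(8) by (simp add: mult_le_0_iff)
    then have "r = 0" using r0 by simp
    moreover have "0 < \<delta> * g P0" using gP0 a(8) by simp
    ultimately show False using bnd[OF P0(1)] eg(1)[OF P0(1)] by linarith
  qed
qed
end
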